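(* If a learning dynamic over $n$ actions is finitely passive (resp. finitely lossless), then for any mixed strategy $\mathbf{x}^*\in\Delta^n$, its learning operator with shift $\mathbf{x}^*$ is finitely passive (resp. finitely lossless).
   Context: $\Delta^n=\{\mathbf{x}\in\mathbb{R}^n: x_j\ge 0,\ \sum_j x_j=1\}$; $\mathbf{e}_j$ is the $j$-th standard basis vector. A learning dynamic over $n$ actions is specified by a conversion function $f:\mathbb{R}^n\to\Delta^n$: given an initial state $\mathbf{q}^0\in\mathbb{R}^n$ and an input function $\mathbf{p}:[0,\infty)\to\mathbb{R}^n$ square integrable on bounded intervals, the state is $\mathbf{q}(t)=\mathbf{q}^0+\int_0^t\mathbf{p}(\tau)\,d\tau$ and the strategy is $\mathbf{x}(t)=f(\mathbf{q}(t))$. The learning operator with shift $\mathbf{x}^*\in\mathbb{R}^n$ has state $\mathbf{q}$, input $\mathbf{p}$, output $\mathbf{x}-\mathbf{x}^*$; it is passive via a storage function $L:\mathbb{R}^n\to\mathbb{R}$ if for every $\mathbf{q}^0$, every $\mathbf{p}$ and every $t\ge0$, $L(\mathbf{q}(t))\le L(\mathbf{q}^0)+\int_0^t\langle\mathbf{p}(\tau),\mathbf{x}(\tau)-\mathbf{x}^*\rangle\,d\tau$, lossless if equality always holds, and finitely passive (resp. finitely lossless) if it is passive (resp. lossless) via a storage function that is bounded from below. A learning dynamic is finitely passive (resp. finitely lossless) if for every action $j$ its learning operator with shift $\mathbf{e}_j$ is finitely passive (resp. finitely lossless). *)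

theory Defs
  imports "HOL-Analysis.Analysis"
begin

text \<open>Actions are indexed by a finite type 'n (n = CARD('n)); R^n is real^'n.\<close>

definition prob_simplex :: "(real^'n) set" where
  "prob_simplex = {x. (\<forall>j. x $ j \<ge> 0) \<and> (\<Sum>j\<in>UNIV. x $ j) = 1}"

definition learning_dynamic :: "(real^'n \<Rightarrow> real^'n) \<Rightarrow> bool" where
  "learning_dynamic f \<longleftrightarrow> (\<forall>q. f q \<in> prob_simplex)"

definition loc_sq_integrable :: "(real \<Rightarrow> real^'n) \<Rightarrow> bool" where
  "loc_sq_integrable p \<longleftrightarrow>
     (\<forall>t\<ge>0. p measurable_on {0..t} \<and> (\<lambda>\<tau>. (norm (p \<tau>))\<^sup>2) integrable_on {0..t})"

definition state :: "real^'n \<Rightarrow> (real \<Rightarrow> real^'n) \<Rightarrow> real \<Rightarrow> real^'n" where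
  "state q0 p t = q0 + integral {0..t} p"

definition passive_via ::
  "(real^'n \<Rightarrow> real^'n) \<Rightarrow> real^'n \<Rightarrow> (real^'n \<Rightarrow> real) \<Rightarrow> bool" where
  "passive_via f xs L \<longleftrightarrow>
     (\<forall>q0 p t. loc_sq_integrable p \<and> t \<ge> 0 \<longrightarrow>
        L (state q0 p t) \<le> L q0 + integral {0..t} (\<lambda>\<tau>. inner (p \<tau>) (f (state q0 p \<tau>) - xs)))"

definition lossless_via ::
  "(real^'n \<Rightarrow> real^'n) \<Rightarrow> real^'n \<Rightarrow> (real^'n \<Rightarrow> real) \<Rightarrow> bool" where
  "lossless_via f xs L \<longleftrightarrow>
     (\<forall>q0 p t. loc_sq_integrable p \<and> t \<ge> 0 \<longrightarrow>
        L (state q0 p t) = L q0 + integral {0..t} (\<lambda>\<tau>. inner (p \<tau>) (f (state q0 p \<tau>) - xs)))"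

definition finitely_passive_op :: "(real^'n \<Rightarrow> real^'n) \<Rightarrow> real^'n \<Rightarrow> bool" where
  "finitely_passive_op f xs \<longleftrightarrow> (\<exists>L. bdd_below (range L) \<and> passive_via f xs L)"

definition finitely_lossless_op :: "(real^'n \<Rightarrow> real^'n) \<Rightarrow> real^'n \<Rightarrow> bool" where
  "finitely_lossless_op f xs \<longleftrightarrow> (\<exists>L. bdd_below (range L) \<and> lossless_via f xs L)"

definition finitely_passive_dyn :: "(real^'n \<Rightarrow> real^'n) \<Rightarrow> bool" where
  "finitely_passive_dyn f \<longleftrightarrow> (\<forall>j. finitely_passive_op f (axis j 1))"

definition finitely_lossless_dyn :: "(real^'n \<Rightarrow> real^'n) \<Rightarrow> bool" where
  "finitely_lossless_dyn f \<longleftrightarrow> (\<forall>j. finitely_lossless_op f (axis j 1))"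

end

theory Submission
  imports Defs
begin

lemma p_integrable:
  fixes p :: "real \<Rightarrow> real^'n"
  assumes "loc_sq_integrable p" "t \<ge> 0"
  shows "p integrable_on {0..t}"
proof -
  have m: "p measurable_on {0..t}" and sq: "(\<lambda>\<tau>. (norm (p \<tau>))\<^sup>2) integrable_on {0..t}"
    using assms unfolding loc_sq_integrable_def by auto
  have S: "{0..t} \<in> sets lebesgue" by simp
  have b: "p \<in> borel_measurable (lebesgue_on {0..t})"
    using m measurable_on_iff_borel_measurable[OF S] by blast
  have g: "(\<lambda>\<tau>. 1 + (norm (p \<tau>))\<^sup>2) integrable_on {0..t}"
    using sq by (intro integrable_add) auto
  show ?thesis
  proof (rule measurable_bounded_by_integrable_imp_integrable[OF b g _ S])
    fix x
    show "norm (p x) \<le> 1 + (norm (p x))\<^sup>2"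
    proof (cases "norm (p x) \<le> 1")
      case False then have "norm (p x) * 1 \<le> norm (p x) * norm (p x)" by (intro mult_left_mono) auto
      then show ?thesis by (simp add: power2_eq_square)
    qed (smt (verit) zero_le_power2)
  qed
qed

lemma comb:
  fixes p :: "real \<Rightarrow> real^'n" and F :: "real \<Rightarrow> real^'n"
  assumes pint: "p integrable_on {0..t}" and xs: "xs \<in> prob_simplex"
  shows "(\<Sum>j\<in>UNIV. xs $ j * integral {0..t} (\<lambda>\<tau>. inner (p \<tau>) (F \<tau> - axis j 1)))
       = integral {0..t} (\<lambda>\<tau>. inner (p \<tau>) (F \<tau> - xs))"
proof -
  have s1: "(\<Sum>j\<in>UNIV. xs $ j) = 1" using xs unfolding prob_simplex_def by auto
  define h where "h = (\<lambda>\<tau>. inner (p \<tau>) (F \<tau>))"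
  have e1: "(\<lambda>\<tau>. inner (p \<tau>) (F \<tau> - axis j 1)) = (\<lambda>\<tau>. h \<tau> - p \<tau> $ j)" for j
    by (auto simp: h_def inner_diff_right inner_axis)
  have e2: "(\<lambda>\<tau>. inner (p \<tau>) (F \<tau> - xs)) = (\<lambda>\<tau>. h \<tau> - inner (p \<tau>) xs)"
    by (auto simp: h_def inner_diff_right)
  have pj: "(\<lambda>\<tau>. p \<tau> $ j) integrable_on {0..t}" for j
    using integrable_component[OF pint, of "axis j 1"] by (simp add: inner_axis)
  have px: "(\<lambda>\<tau>. inner (p \<tau>) xs) integrable_on {0..t}"
    using integrable_component[OF pint, of xs] by simp
  show ?thesis
  proof (cases "h integrable_on {0..t}")
    case True
    have "(\<Sum>j\<in>UNIV. xs $ j * integral {0..t} (\<lambda>\<tau>. h \<tau> - p \<tau> $ j))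
        = (\<Sum>j\<in>UNIV. xs $ j * integral {0..t} h - xs $ j * integral {0..t} p $ j)"
      using True pj pint by (simp add: integral_diff right_diff_distrib)
    also have "\<dots> = (\<Sum>j\<in>UNIV. xs $ j) * integral {0..t} h - (\<Sum>j\<in>UNIV. xs $ j * integral {0..t} p $ j)"
      by (simp add: sum_subtractf sum_distrib_right)
    also have "\<dots> = integral {0..t} h - inner (integral {0..t} p) xs"
      by (simp add: s1 inner_vec_def mult.commute)
    also have "\<dots> = integral {0..t} (\<lambda>\<tau>. h \<tau> - inner (p \<tau>) xs)"
      using True px pint by (simp add: integral_diff integral_component_eq)
    finally show ?thesis by (simp add: e1 e2)
  next
    case False
    have n1: "\<not> (\<lambda>\<tau>. h \<tau> - p \<tau> $ j) integrable_on {0..t}" for j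
    proof
      assume "(\<lambda>\<tau>. h \<tau> - p \<tau> $ j) integrable_on {0..t}"
      from integrable_add[OF this pj[of j]] False show False by simp
    qed
    have n2: "\<not> (\<lambda>\<tau>. h \<tau> - inner (p \<tau>) xs) integrable_on {0..t}"
    proof
      assume "(\<lambda>\<tau>. h \<tau> - inner (p \<tau>) xs) integrable_on {0..t}"
      from integrable_add[OF this px] False show False by simp
    qed
    show ?thesis using n1 n2 by (simp add: e1 e2 not_integrable_integral)
  qed
qed


lemma bdd_comb:
  fixes Lj :: "'n \<Rightarrow> real^'n \<Rightarrow> real"
  assumes "\<And>j. bdd_below (range (Lj j))" "xs \<in> prob_simplex"
  shows "bdd_below (range (\<lambda>q. \<Sum>j\<in>UNIV. xs $ j * Lj j q))"
proof -
  have "\<forall>j. \<exists>b. \<forall>q. b \<le> Lj j q" using assms(1) by (auto simp: bdd_below_def)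
  then obtain b where b: "\<And>j q. b j \<le> Lj j q" by metis
  have nn: "\<And>j. xs $ j \<ge> 0" using assms(2) by (auto simp: prob_simplex_def)
  have "(\<Sum>j\<in>UNIV. xs $ j * b j) \<le> (\<Sum>j\<in>UNIV. xs $ j * Lj j q)" for q
    by (intro sum_mono mult_left_mono b nn)
  then show ?thesis by (auto simp: bdd_below_def)
qed

theorem proposition3p6:
  fixes f :: "real^'n \<Rightarrow> real^'n" and xs :: "real^'n"
  assumes "learning_dynamic f"
    and "xs \<in> prob_simplex"
  shows "(finitely_passive_dyn f \<longrightarrow> finitely_passive_op f xs)
       \<and> (finitely_lossless_dyn f \<longrightarrow> finitely_lossless_op f xs)"
proof (intro conjI impI)
  have nn: "\<And>j. xs $ j \<ge> 0" using assms(2) by (auto simp: prob_simplex_def)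
  assume "finitely_passive_dyn f"
  then have "\<forall>j. \<exists>L. bdd_below (range L) \<and> passive_via f (axis j 1) L"
    by (auto simp: finitely_passive_dyn_def finitely_passive_op_def)
  from choice[OF this] obtain Lj where LL: "\<forall>j. bdd_below (range (Lj j)) \<and> passive_via f (axis j 1) (Lj j)"
    by blast
  then have Lb: "\<And>j. bdd_below (range (Lj j))"
    and Lp: "\<And>j. passive_via f (axis j 1) (Lj j)" by auto
  define L where "L = (\<lambda>q. \<Sum>j\<in>UNIV. xs $ j * Lj j q)"
  have "passive_via f xs L"
    unfolding passive_via_def
  proof (intro allI impI)
    fix q0 :: "real^'n" and p :: "real \<Rightarrow> real^'n" and t :: real assume h: "loc_sq_integrable p \<and> (t::real) \<ge> 0"
    have "L (state q0 p t) \<le> (\<Sum>j\<in>UNIV. xs $ j * (Lj j q0 + integral {0..t}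
        (\<lambda>\<tau>. inner (p \<tau>) (f (state q0 p \<tau>) - axis j 1))))"
    proof -
      have "Lj j (state q0 p t) \<le> Lj j q0 + integral {0..t} (\<lambda>\<tau>. inner (p \<tau>) (f (state q0 p \<tau>) - axis j 1))" for j
        using Lp[of j, unfolded passive_via_def, rule_format, of p t q0] h by blast
      then show ?thesis unfolding L_def by (intro sum_mono mult_left_mono nn)
    qed
    also have "\<dots> = L q0 + integral {0..t} (\<lambda>\<tau>. inner (p \<tau>) (f (state q0 p \<tau>) - xs))"
    proof -
      have c: "(\<Sum>j\<in>UNIV. xs $ j * integral {0..t} (\<lambda>\<tau>. inner (p \<tau>) (f (state q0 p \<tau>) - axis j 1)))
          = integral {0..t} (\<lambda>\<tau>. inner (p \<tau>) (f (state q0 p \<tau>) - xs))"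
      proof -
        have pi: "p integrable_on {0..t}" using p_integrable[of p t] h by blast
        show ?thesis using comb[OF pi assms(2), of "\<lambda>\<tau>. f (state q0 p \<tau>)"] by simp
      qed
      show ?thesis unfolding L_def c[symmetric] distrib_left sum.distrib ..
    qed
    finally show "L (state q0 p t) \<le> L q0 + integral {0..t} (\<lambda>\<tau>. inner (p \<tau>) (f (state q0 p \<tau>) - xs))" .
  qed
  moreover have "bdd_below (range L)" unfolding L_def by (rule bdd_comb[of Lj xs, OF Lb assms(2)])
  ultimately show "finitely_passive_op f xs"
    unfolding finitely_passive_op_def by blast
next
  assume "finitely_lossless_dyn f"
  then have "\<forall>j. \<exists>L. bdd_below (range L) \<and> lossless_via f (axis j 1) L"
    by (auto simp: finitely_lossless_dyn_def finitely_lossless_op_def)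
  from choice[OF this] obtain Lj where LL: "\<forall>j. bdd_below (range (Lj j)) \<and> lossless_via f (axis j 1) (Lj j)"
    by blast
  then have Lb: "\<And>j. bdd_below (range (Lj j))"
    and Lp: "\<And>j. lossless_via f (axis j 1) (Lj j)" by auto
  define L where "L = (\<lambda>q. \<Sum>j\<in>UNIV. xs $ j * Lj j q)"
  have "lossless_via f xs L"
    unfolding lossless_via_def
  proof (intro allI impI)
    fix q0 :: "real^'n" and p :: "real \<Rightarrow> real^'n" and t :: real assume h: "loc_sq_integrable p \<and> (t::real) \<ge> 0"
    have "L (state q0 p t) = (\<Sum>j\<in>UNIV. xs $ j * (Lj j q0 + integral {0..t}
        (\<lambda>\<tau>. inner (p \<tau>) (f (state q0 p \<tau>) - axis j 1))))"
    proof -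
      have "Lj j (state q0 p t) = Lj j q0 + integral {0..t} (\<lambda>\<tau>. inner (p \<tau>) (f (state q0 p \<tau>) - axis j 1))" for j
        using Lp[of j, unfolded lossless_via_def, rule_format, of p t q0] h by blast
      then show ?thesis unfolding L_def by (intro sum.cong refl) presburger
    qed
    also have "\<dots> = L q0 + integral {0..t} (\<lambda>\<tau>. inner (p \<tau>) (f (state q0 p \<tau>) - xs))"
    proof -
      have c: "(\<Sum>j\<in>UNIV. xs $ j * integral {0..t} (\<lambda>\<tau>. inner (p \<tau>) (f (state q0 p \<tau>) - axis j 1)))
          = integral {0..t} (\<lambda>\<tau>. inner (p \<tau>) (f (state q0 p \<tau>) - xs))"
      proof -
        have pi: "p integrable_on {0..t}" using p_integrable[of p t] h by blast
        show ?thesis using comb[OF pi assms(2), of "\<lambda>\<tau>. f (state q0 p \<tau>)"] by simp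
      qed
      show ?thesis unfolding L_def c[symmetric] distrib_left sum.distrib ..
    qed
    finally show "L (state q0 p t) = L q0 + integral {0..t} (\<lambda>\<tau>. inner (p \<tau>) (f (state q0 p \<tau>) - xs))" .
  qed
  moreover have "bdd_below (range L)" unfolding L_def by (rule bdd_comb[of Lj xs, OF Lb assms(2)])
  ultimately show "finitely_lossless_op f xs"
    unfolding finitely_lossless_op_def by blast
qed

end
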